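(* Let $\Gamma$ be a Lie group with a left invariant metric, $\Gamma_0\triangleleft\Gamma$ the connected component of the identity, $\Gamma_i$ a sequence of discrete groups, and $f_i:\Gamma_i\to\Gamma$ a discrete approximation. Let $r>0$ be such that $B_e(r,\Gamma)\subset\Gamma_0$, and for each $i$ let $G_i\leq\Gamma_i$ be the subgroup generated by $f_i^{-1}(B_e(r,\Gamma))$. Then for $i$ large enough, $G_i$ is a normal subgroup of $\Gamma_i$.
   Context: A sequence of functions $f_i:\Gamma_i\to\Gamma$ is a discrete approximation if there is $R_0>0$ such that for large $i$, $f_i^{-1}(B_e(R_0,\Gamma))$ is a generating set of $\Gamma_i$ containing the identity, and for every $R>0$, $\varepsilon>0$ there is $i_0$ such that for all $i\geq i_0$: (1) $f_i^{-1}(B_e(R,\Gamma))$ is finite; (2) $f_i(\Gamma_i)$ intersects each ball of radius $\varepsilon$ centered at a point of $B_e(R,\Gamma)$; (3) for all $g_1,g_2\in f_i^{-1}(B_e(R,\Gamma))$, $d(f_i(g_1g_2^{-1}),f_i(g_1)f_i(g_2^{-1}))\leq\varepsilon$. *)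

theory Defs
  imports "HOL-Analysis.Analysis" "HOL-Algebra.Algebra"
begin

text \<open>Iterated directional derivatives: dderiv [v1,...,vk] f is the derivative of f
  first along vk, ..., last along v1.\<close>
fun dderiv :: "'a::real_normed_vector list \<Rightarrow> ('a \<Rightarrow> 'b::real_normed_vector) \<Rightarrow> 'a \<Rightarrow> 'b" where
  "dderiv [] f = f"
| "dderiv (v # vs) f = (\<lambda>x. vector_derivative (\<lambda>t. dderiv vs f (x + t *\<^sub>R v)) (at 0))"

definition smooth_on :: "'a::real_normed_vector set \<Rightarrow> 'a set \<Rightarrow> ('a \<Rightarrow> 'b::real_normed_vector) \<Rightarrow> bool" where
  "smooth_on V S f \<longleftrightarrow>
     (\<forall>vs\<in>lists V. continuous_on S (dderiv vs f) \<and>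
        (\<forall>v\<in>V. \<forall>x\<in>S. ((\<lambda>t. dderiv vs f (x + t *\<^sub>R v)) has_vector_derivative dderiv (v # vs) f x) (at 0)))"

text \<open>A chart on the topological space of type 'g modelled on the linear subspace V
  of the Euclidean space 'e (V plays the role of R^n; n = dim V may be 0).\<close>
definition is_chart :: "'e::euclidean_space set \<Rightarrow> ('g::topological_space set \<times> ('g \<Rightarrow> 'e)) \<Rightarrow> bool" where
  "is_chart V c \<longleftrightarrow> (case c of (U, \<phi>) \<Rightarrow>
      open U \<and> inj_on \<phi> U \<and> openin (top_of_set V) (\<phi> ` U) \<and>
      homeomorphism U (\<phi> ` U) \<phi> (inv_into U \<phi>))"

definition smooth_atlas :: "'e::euclidean_space set \<Rightarrow> ('g::topological_space set \<times> ('g \<Rightarrow> 'e)) set \<Rightarrow> bool" where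
  "smooth_atlas V A \<longleftrightarrow> subspace V \<and> (\<forall>c\<in>A. is_chart V c) \<and> \<Union>(fst ` A) = UNIV \<and>
     (\<forall>(U, \<phi>)\<in>A. \<forall>(W, \<psi>)\<in>A. smooth_on V (\<phi> ` (U \<inter> W)) (\<psi> \<circ> inv_into U \<phi>))"

definition lie_group :: "'e::euclidean_space itself \<Rightarrow> 'g::topological_space monoid \<Rightarrow> bool" where
  "lie_group _ G \<longleftrightarrow> group G \<and> carrier G = UNIV \<and>
     continuous_on UNIV (\<lambda>p. fst p \<otimes>\<^bsub>G\<^esub> snd p) \<and> continuous_on UNIV (\<lambda>x. inv\<^bsub>G\<^esub> x) \<and>
     (\<exists>(V::'e set) A. smooth_atlas V A \<and>
        (\<forall>(U1, \<phi>1)\<in>A. \<forall>(U2, \<phi>2)\<in>A. \<forall>(W, \<psi>)\<in>A.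
           smooth_on (V \<times> V) {(\<phi>1 a, \<phi>2 b) | a b. a \<in> U1 \<and> b \<in> U2 \<and> a \<otimes>\<^bsub>G\<^esub> b \<in> W}
             (\<lambda>(p, q). \<psi> (inv_into U1 \<phi>1 p \<otimes>\<^bsub>G\<^esub> inv_into U2 \<phi>2 q))) \<and>
        (\<forall>(U, \<phi>)\<in>A. \<forall>(W, \<psi>)\<in>A.
           smooth_on V {\<phi> a | a. a \<in> U \<and> inv\<^bsub>G\<^esub> a \<in> W} (\<lambda>p. \<psi> (inv\<^bsub>G\<^esub> (inv_into U \<phi> p)))))"

definition left_invariant_metric :: "'g::metric_space monoid \<Rightarrow> bool" where
  "left_invariant_metric G \<longleftrightarrow> (\<forall>g x y. dist (g \<otimes>\<^bsub>G\<^esub> x) (g \<otimes>\<^bsub>G\<^esub> y) = dist x y)"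

definition discrete_approximation ::
  "(nat \<Rightarrow> 'a monoid) \<Rightarrow> 'g::metric_space monoid \<Rightarrow> (nat \<Rightarrow> 'a \<Rightarrow> 'g) \<Rightarrow> bool" where
  "discrete_approximation Gs G f \<longleftrightarrow>
     (\<exists>R0>0. \<exists>N. \<forall>i\<ge>N.
        generate (Gs i) {g \<in> carrier (Gs i). f i g \<in> ball \<one>\<^bsub>G\<^esub> R0} = carrier (Gs i) \<and>
        \<one>\<^bsub>Gs i\<^esub> \<in> {g \<in> carrier (Gs i). f i g \<in> ball \<one>\<^bsub>G\<^esub> R0}) \<and>
     (\<forall>R>0. \<forall>\<epsilon>>0. \<exists>i0. \<forall>i\<ge>i0.
        finite {g \<in> carrier (Gs i). f i g \<in> ball \<one>\<^bsub>G\<^esub> R} \<and>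
        (\<forall>x\<in>ball \<one>\<^bsub>G\<^esub> R. f i ` carrier (Gs i) \<inter> ball x \<epsilon> \<noteq> {}) \<and>
        (\<forall>g1\<in>{g \<in> carrier (Gs i). f i g \<in> ball \<one>\<^bsub>G\<^esub> R}.
         \<forall>g2\<in>{g \<in> carrier (Gs i). f i g \<in> ball \<one>\<^bsub>G\<^esub> R}.
           dist (f i (g1 \<otimes>\<^bsub>Gs i\<^esub> inv\<^bsub>Gs i\<^esub> g2)) (f i g1 \<otimes>\<^bsub>G\<^esub> f i (inv\<^bsub>Gs i\<^esub> g2)) \<le> \<epsilon>))"

end

theory Submission
  imports Defs
begin


lemma chart_local_compact:
  fixes \<phi> :: "'g::metric_space \<Rightarrow> 'e::euclidean_space"
  assumes ch: "is_chart V (U, \<phi>)" and sV: "subspace V" and xU: "x \<in> U"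
  shows "\<exists>\<rho>>0. compact (cball x \<rho>)"
proof -
  from ch have oU: "open U" and ow: "openin (top_of_set V) (\<phi> ` U)"
    and hom: "homeomorphism U (\<phi> ` U) \<phi> (inv_into U \<phi>)"
    by (auto simp: is_chart_def)
  let ?\<psi> = "inv_into U \<phi>"
  from ow obtain Q where oO: "open Q" and WO: "\<phi> ` U = Q \<inter> V" by (auto simp: openin_open)
  have yO: "\<phi> x \<in> Q" using WO xU by auto
  then obtain e where e: "e > 0" "ball (\<phi> x) e \<subseteq> Q" using oO open_contains_ball by blast
  define C' where "C' = cball (\<phi> x) (e/2) \<inter> V"
  have cC': "compact C'" unfolding C'_def using closed_subspace[OF sV] by (intro compact_Int_closed) auto
  have C'W: "C' \<subseteq> \<phi> ` U" unfolding C'_def WO using e by auto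
  have cpsi: "continuous_on (\<phi> ` U) ?\<psi>" and cphi: "continuous_on U \<phi>"
    using hom by (auto simp: homeomorphism_def)
  have psiphi: "\<And>z. z \<in> U \<Longrightarrow> ?\<psi> (\<phi> z) = z" using hom by (auto simp: homeomorphism_def)
  define C where "C = ?\<psi> ` C'"
  have cC: "compact C" unfolding C_def
    by (rule compact_continuous_image[OF continuous_on_subset[OF cpsi C'W] cC'])
  define Q' where "Q' = \<phi> -` ball (\<phi> x) (e/2) \<inter> U"
  have oO': "open Q'" unfolding Q'_def using continuous_on_open_vimage[OF oU] cphi by auto
  have xO': "x \<in> Q'" unfolding Q'_def using xU e by auto
  have Q'C: "Q' \<subseteq> C"
  proof
    fix z assume z: "z \<in> Q'"
    then have "\<phi> z \<in> C'" unfolding Q'_def C'_def using WO by auto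
    then show "z \<in> C" unfolding C_def using psiphi z Q'_def by (metis IntD2 image_eqI)
  qed
  obtain \<rho> where \<rho>: "\<rho> > 0" "ball x \<rho> \<subseteq> Q'" using oO' xO' open_contains_ball by blast
  have "cball x (\<rho>/2) \<subseteq> ball x \<rho>" using \<rho> by (auto simp: subset_eq)
  then have "cball x (\<rho>/2) \<subseteq> C" using \<rho> Q'C by blast
  then have "compact (cball x (\<rho>/2))"
    by (metis cC closed_cball compact_Int_closed inf.absorb_iff2)
  then show ?thesis using \<rho> by (intro exI[of _ "\<rho>/2"]) auto
qed



lemma (in group) conj_generate:
  assumes S: "S \<subseteq> carrier G" and c: "c \<in> carrier G"
    and hs: "\<forall>s\<in>S. c \<otimes> s \<otimes> inv c \<in> generate G S"
    and h: "h \<in> generate G S"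
  shows "c \<otimes> h \<otimes> inv c \<in> generate G S"
  using h
proof (induction h rule: generate.induct)
  case one
  then show ?case using c by (simp add: generate.one)
next
  case (incl h)
  then show ?case using hs by blast
next
  case (inv h)
  have hc: "h \<in> carrier G" using inv S by auto
  have "inv (c \<otimes> h \<otimes> inv c) \<in> generate G S"
    using subgroup.m_inv_closed[OF generate_is_subgroup[OF S]] hs inv by blast
  moreover have "inv (c \<otimes> h \<otimes> inv c) = c \<otimes> inv h \<otimes> inv c"
    using hc c by (simp add: inv_mult_group m_assoc)
  ultimately show ?case by simp
next
  case (eng h1 h2)
  have h1: "h1 \<in> carrier G" and h2: "h2 \<in> carrier G"
    using eng generate_in_carrier[OF S] by auto
  have "(c \<otimes> h1 \<otimes> inv c) \<otimes> (c \<otimes> h2 \<otimes> inv c) \<in> generate G S"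
    using eng by (simp add: generate.eng)
  moreover have "(c \<otimes> h1 \<otimes> inv c) \<otimes> (c \<otimes> h2 \<otimes> inv c) = c \<otimes> (h1 \<otimes> h2) \<otimes> inv c"
    using h1 h2 c by (simp add: m_assoc[symmetric]) (simp add: m_assoc)
  ultimately show ?case by simp
qed

lemma (in group) normal_generate:
  assumes T: "T \<subseteq> carrier G" and gen: "generate G T = carrier G" and S: "S \<subseteq> carrier G"
    and hs: "\<forall>t\<in>T. \<forall>s\<in>S. t \<otimes> s \<otimes> inv t \<in> generate G S \<and> inv t \<otimes> s \<otimes> t \<in> generate G S"
  shows "generate G S \<lhd> G"
proof -
  let ?P = "\<lambda>c. \<forall>h\<in>generate G S. c \<otimes> h \<otimes> inv c \<in> generate G S"
  have "?P x" if x: "x \<in> generate G T" for x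
    using x
  proof (induction x rule: generate.induct)
    case one
    then show ?case using generate_in_carrier[OF S] by auto
  next
    case (incl t)
    then show ?case using conj_generate[OF S] hs T by blast
  next
    case (inv t)
    have "t \<in> carrier G" using inv T by auto
    then show ?case using conj_generate[OF S, of "inv t"] hs inv by simp
  next
    case (eng x1 x2)
    have x1: "x1 \<in> carrier G" and x2: "x2 \<in> carrier G"
      using eng generate_in_carrier[OF T] by auto
    show ?case
    proof
      fix h assume h: "h \<in> generate G S"
      have hc: "h \<in> carrier G" using h generate_in_carrier[OF S] by auto
      have "x1 \<otimes> (x2 \<otimes> h \<otimes> inv x2) \<otimes> inv x1 \<in> generate G S"
        using eng h by blast
      moreover have "x1 \<otimes> (x2 \<otimes> h \<otimes> inv x2) \<otimes> inv x1 = x1 \<otimes> x2 \<otimes> h \<otimes> inv (x1 \<otimes> x2)"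
        using x1 x2 hc by (simp add: inv_mult_group m_assoc)
      ultimately show "x1 \<otimes> x2 \<otimes> h \<otimes> inv (x1 \<otimes> x2) \<in> generate G S" by simp
    qed
  qed
  then show ?thesis
    unfolding normal_inv_iff using generate_is_subgroup[OF S] gen by auto
qed



locale mgroup =
  fixes G :: "'g::metric_space monoid" (structure)
  assumes grp: "group G" and carr: "carrier G = UNIV" and li: "left_invariant_metric G"
    and cmul: "continuous_on UNIV (\<lambda>p. fst p \<otimes> snd p)"
    and cinv: "continuous_on UNIV (\<lambda>x. inv x)"
    and lc: "\<exists>\<rho>>0. compact (cball \<one> \<rho>)"
begin

interpretation group G by (rule grp)

lemma dl: "dist (g \<otimes> x) (g \<otimes> y) = dist x y"
  using li by (simp add: left_invariant_metric_def)

lemma inC[simp]: "x \<in> carrier G" using carr by auto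

lemma dist_inv_one: "dist \<one> (inv a) = dist a \<one>"
  using dl[of a \<one> "inv a"] by simp

lemma dist_mult_le: "dist \<one> (a \<otimes> b) \<le> dist \<one> a + dist \<one> b"
proof -
  have "dist \<one> (a \<otimes> b) \<le> dist \<one> a + dist a (a \<otimes> b)" by (rule dist_triangle)
  also have "dist a (a \<otimes> b) = dist \<one> b" using dl[of a \<one> b] by simp
  finally show ?thesis .
qed

lemma dist_to_one: "dist a b = dist \<one> (inv a \<otimes> b)"
  using dl[of "inv a" a b] by simp

lemma cont_mult:
  assumes "continuous_on S a" "continuous_on S b"
  shows "continuous_on S (\<lambda>x. a x \<otimes> b x)"
proof -
  have "continuous_on S (\<lambda>x. (a x, b x))" using assms by (intro continuous_on_Pair)
  from continuous_on_compose2[OF cmul this] show ?thesis by auto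
qed

lemma cont_inv:
  assumes "continuous_on S a"
  shows "continuous_on S (\<lambda>x. inv (a x))"
  using continuous_on_compose2[OF cinv assms] by auto

lemma compact_cball_all:
  assumes net: "\<And>R \<epsilon>. \<epsilon> > 0 \<Longrightarrow> \<exists>F. finite F \<and> ball \<one> R \<subseteq> (\<Union>y\<in>F. ball y \<epsilon>)"
  shows "compact (cball \<one> R)"
proof -
  obtain \<rho> where \<rho>: "\<rho> > 0" "compact (cball \<one> \<rho>)" using lc by blast
  have cg: "compact (cball g \<rho>)" for g :: 'g
  proof -
    have "cball g \<rho> = (\<lambda>x. g \<otimes> x) ` cball \<one> \<rho>"
    proof (rule subset_antisym; rule subsetI)
      fix y assume "y \<in> cball g \<rho>"
      then have "inv g \<otimes> y \<in> cball \<one> \<rho>" using dist_to_one[of g y] by simp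
      moreover have "y = g \<otimes> (inv g \<otimes> y)" by (simp add: m_assoc[symmetric])
      ultimately show "y \<in> (\<lambda>x. g \<otimes> x) ` cball \<one> \<rho>" by blast
    next
      fix y assume "y \<in> (\<lambda>x. g \<otimes> x) ` cball \<one> \<rho>"
      then obtain x where "x \<in> cball \<one> \<rho>" "y = g \<otimes> x" by blast
      then show "y \<in> cball g \<rho>" using dl[of g \<one> x] by simp
    qed
    moreover have "continuous_on UNIV (\<lambda>x. g \<otimes> x)"
      by (intro cont_mult continuous_on_const continuous_on_id)
    ultimately show ?thesis using compact_continuous_image[OF _ \<rho>(2)]
      by (metis continuous_on_subset top_greatest)
  qed
  obtain F where F: "finite F" "ball \<one> (R+1) \<subseteq> (\<Union>y\<in>F. ball y \<rho>)" using net \<rho>(1) by blast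
  have "cball \<one> R \<subseteq> (\<Union>y\<in>F. cball y \<rho>)"
  proof
    fix x assume "x \<in> cball \<one> R"
    then have "x \<in> ball \<one> (R+1)" by simp
    then obtain y where "y \<in> F" "x \<in> ball y \<rho>" using F by blast
    then show "x \<in> (\<Union>y\<in>F. cball y \<rho>)" by (auto intro: less_imp_le)
  qed
  moreover have "compact (\<Union>y\<in>F. cball y \<rho>)" using F(1) cg by (intro compact_UN) auto
  ultimately show ?thesis
    by (metis closed_cball compact_Int_closed inf.absorb_iff2)
qed

lemma conj_component:
  assumes "b \<in> connected_component_set UNIV \<one>"
  shows "a \<otimes> b \<otimes> inv a \<in> connected_component_set UNIV \<one>"
proof -
  let ?C = "connected_component_set UNIV \<one>"
  let ?h = "\<lambda>x. a \<otimes> x \<otimes> inv a"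
  have "continuous_on ?C ?h" by (intro cont_mult continuous_on_const continuous_on_id)
  then have "connected (?h ` ?C)"
    using connected_continuous_image connected_connected_component by blast
  moreover have "\<one> \<in> ?h ` ?C"
    by (rule image_eqI[of _ _ \<one>]) (auto simp: connected_component_refl)
  ultimately have "?h ` ?C \<subseteq> ?C" by (intro connected_component_maximal) auto
  then show ?thesis using assms by blast
qed

end



locale dapp = mgroup G for G :: "'g::metric_space monoid" (structure) +
  fixes Gs :: "nat \<Rightarrow> 'a monoid" and f :: "nat \<Rightarrow> 'a \<Rightarrow> 'g" and r :: real
  assumes grps: "\<And>i. group (Gs i)" and da: "discrete_approximation Gs G f"
    and rpos: "r > 0" and rcomp: "ball \<one> r \<subseteq> connected_component_set UNIV \<one>"
begin

interpretation group G by (rule grp)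

definition S where "S i = {g \<in> carrier (Gs i). f i g \<in> ball \<one> r}"
definition H where "H i = generate (Gs i) (S i)"

lemma da1: "\<exists>R0>0. \<exists>N. \<forall>i\<ge>N.
        generate (Gs i) {g \<in> carrier (Gs i). f i g \<in> ball \<one> R0} = carrier (Gs i) \<and>
        \<one>\<^bsub>Gs i\<^esub> \<in> {g \<in> carrier (Gs i). f i g \<in> ball \<one> R0}"
  using da unfolding discrete_approximation_def by blast

lemma da2: assumes "R > 0" "\<epsilon> > 0"
  shows "eventually (\<lambda>i. finite {g \<in> carrier (Gs i). f i g \<in> ball \<one> R} \<and>
        (\<forall>x\<in>ball \<one> R. f i ` carrier (Gs i) \<inter> ball x \<epsilon> \<noteq> {}) \<and>
        (\<forall>g1\<in>{g \<in> carrier (Gs i). f i g \<in> ball \<one> R}.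
         \<forall>g2\<in>{g \<in> carrier (Gs i). f i g \<in> ball \<one> R}.
           dist (f i (g1 \<otimes>\<^bsub>Gs i\<^esub> inv\<^bsub>Gs i\<^esub> g2)) (f i g1 \<otimes> f i (inv\<^bsub>Gs i\<^esub> g2)) \<le> \<epsilon>)) sequentially"
  using da assms unfolding discrete_approximation_def eventually_sequentially by blast

lemma ev_AH: assumes "R > 0" "\<epsilon> > 0"
  shows "eventually (\<lambda>i. \<forall>x\<in>carrier (Gs i). \<forall>y\<in>carrier (Gs i). f i x \<in> ball \<one> R \<longrightarrow>
     f i (inv\<^bsub>Gs i\<^esub> y) \<in> ball \<one> R \<longrightarrow> dist (f i (x \<otimes>\<^bsub>Gs i\<^esub> y)) (f i x \<otimes> f i y) \<le> \<epsilon>) sequentially"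
  using da2[OF assms]
proof (rule eventually_mono)
  fix i assume h: "finite {g \<in> carrier (Gs i). f i g \<in> ball \<one> R} \<and>
        (\<forall>x\<in>ball \<one> R. f i ` carrier (Gs i) \<inter> ball x \<epsilon> \<noteq> {}) \<and>
        (\<forall>g1\<in>{g \<in> carrier (Gs i). f i g \<in> ball \<one> R}.
         \<forall>g2\<in>{g \<in> carrier (Gs i). f i g \<in> ball \<one> R}.
           dist (f i (g1 \<otimes>\<^bsub>Gs i\<^esub> inv\<^bsub>Gs i\<^esub> g2)) (f i g1 \<otimes> f i (inv\<^bsub>Gs i\<^esub> g2)) \<le> \<epsilon>)"
  interpret Gi: group "Gs i" by (rule grps)
  show "\<forall>x\<in>carrier (Gs i). \<forall>y\<in>carrier (Gs i). f i x \<in> ball \<one> R \<longrightarrow>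
     f i (inv\<^bsub>Gs i\<^esub> y) \<in> ball \<one> R \<longrightarrow> dist (f i (x \<otimes>\<^bsub>Gs i\<^esub> y)) (f i x \<otimes> f i y) \<le> \<epsilon>"
  proof (intro ballI impI)
    fix x y assume x: "x \<in> carrier (Gs i)" and y: "y \<in> carrier (Gs i)"
      and fx: "f i x \<in> ball \<one> R" and fy: "f i (inv\<^bsub>Gs i\<^esub> y) \<in> ball \<one> R"
    have iy: "inv\<^bsub>Gs i\<^esub> y \<in> carrier (Gs i)" using y by simp
    have "dist (f i (x \<otimes>\<^bsub>Gs i\<^esub> inv\<^bsub>Gs i\<^esub> (inv\<^bsub>Gs i\<^esub> y))) (f i x \<otimes> f i (inv\<^bsub>Gs i\<^esub> (inv\<^bsub>Gs i\<^esub> y))) \<le> \<epsilon>"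
      using conjunct2[OF conjunct2[OF h]] x iy fx fy by blast
    then show "dist (f i (x \<otimes>\<^bsub>Gs i\<^esub> y)) (f i x \<otimes> f i y) \<le> \<epsilon>" using y by simp
  qed
qed

lemma ev_one: assumes "\<epsilon> > 0"
  shows "eventually (\<lambda>i. dist (f i \<one>\<^bsub>Gs i\<^esub>) \<one> \<le> \<epsilon>) sequentially"
proof -
  obtain R0 N where R0: "R0 > 0" and N: "\<forall>i\<ge>N. \<one>\<^bsub>Gs i\<^esub> \<in> {g \<in> carrier (Gs i). f i g \<in> ball \<one> R0}"
    using da1 by blast
  have "eventually (\<lambda>i. \<one>\<^bsub>Gs i\<^esub> \<in> {g \<in> carrier (Gs i). f i g \<in> ball \<one> R0}) sequentially"
    using N eventually_sequentially by blast
  with da2[OF R0 assms] show ?thesis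
  proof (rule eventually_elim2)
    fix i assume h: "finite {g \<in> carrier (Gs i). f i g \<in> ball \<one> R0} \<and>
        (\<forall>x\<in>ball \<one> R0. f i ` carrier (Gs i) \<inter> ball x \<epsilon> \<noteq> {}) \<and>
        (\<forall>g1\<in>{g \<in> carrier (Gs i). f i g \<in> ball \<one> R0}.
         \<forall>g2\<in>{g \<in> carrier (Gs i). f i g \<in> ball \<one> R0}.
           dist (f i (g1 \<otimes>\<^bsub>Gs i\<^esub> inv\<^bsub>Gs i\<^esub> g2)) (f i g1 \<otimes> f i (inv\<^bsub>Gs i\<^esub> g2)) \<le> \<epsilon>)"
      and one: "\<one>\<^bsub>Gs i\<^esub> \<in> {g \<in> carrier (Gs i). f i g \<in> ball \<one> R0}"
    interpret Gi: group "Gs i" by (rule grps)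
    have "dist (f i (\<one>\<^bsub>Gs i\<^esub> \<otimes>\<^bsub>Gs i\<^esub> inv\<^bsub>Gs i\<^esub> \<one>\<^bsub>Gs i\<^esub>)) (f i \<one>\<^bsub>Gs i\<^esub> \<otimes> f i (inv\<^bsub>Gs i\<^esub> \<one>\<^bsub>Gs i\<^esub>)) \<le> \<epsilon>"
      using h one by blast
    then have "dist (f i \<one>\<^bsub>Gs i\<^esub>) (f i \<one>\<^bsub>Gs i\<^esub> \<otimes> f i \<one>\<^bsub>Gs i\<^esub>) \<le> \<epsilon>" by simp
    moreover have "dist (f i \<one>\<^bsub>Gs i\<^esub>) (f i \<one>\<^bsub>Gs i\<^esub> \<otimes> f i \<one>\<^bsub>Gs i\<^esub>) = dist \<one> (f i \<one>\<^bsub>Gs i\<^esub>)"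
      using dl[of "f i \<one>\<^bsub>Gs i\<^esub>" \<one> "f i \<one>\<^bsub>Gs i\<^esub>"] by simp
    ultimately show "dist (f i \<one>\<^bsub>Gs i\<^esub>) \<one> \<le> \<epsilon>" by (simp add: dist_commute)
  qed
qed

lemma ev_INV: assumes "R > 0" "\<epsilon> > 0"
  shows "eventually (\<lambda>i. \<forall>y\<in>carrier (Gs i). f i y \<in> ball \<one> R \<longrightarrow>
     dist (f i (inv\<^bsub>Gs i\<^esub> y)) (inv (f i y)) \<le> 2 * \<epsilon>) sequentially"
  using ev_one[OF assms(2)] da2[OF assms]
proof (rule eventually_elim2)
  fix i assume o: "dist (f i \<one>\<^bsub>Gs i\<^esub>) \<one> \<le> \<epsilon>" and h: "finite {g \<in> carrier (Gs i). f i g \<in> ball \<one> R} \<and>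
        (\<forall>x\<in>ball \<one> R. f i ` carrier (Gs i) \<inter> ball x \<epsilon> \<noteq> {}) \<and>
        (\<forall>g1\<in>{g \<in> carrier (Gs i). f i g \<in> ball \<one> R}.
         \<forall>g2\<in>{g \<in> carrier (Gs i). f i g \<in> ball \<one> R}.
           dist (f i (g1 \<otimes>\<^bsub>Gs i\<^esub> inv\<^bsub>Gs i\<^esub> g2)) (f i g1 \<otimes> f i (inv\<^bsub>Gs i\<^esub> g2)) \<le> \<epsilon>)"
  interpret Gi: group "Gs i" by (rule grps)
  show "\<forall>y\<in>carrier (Gs i). f i y \<in> ball \<one> R \<longrightarrow>
     dist (f i (inv\<^bsub>Gs i\<^esub> y)) (inv (f i y)) \<le> 2 * \<epsilon>"
  proof (intro ballI impI)
    fix y assume y: "y \<in> carrier (Gs i)" and fy: "f i y \<in> ball \<one> R"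
    have "dist (f i (y \<otimes>\<^bsub>Gs i\<^esub> inv\<^bsub>Gs i\<^esub> y)) (f i y \<otimes> f i (inv\<^bsub>Gs i\<^esub> y)) \<le> \<epsilon>"
      using h y fy by blast
    then have a: "dist (f i \<one>\<^bsub>Gs i\<^esub>) (f i y \<otimes> f i (inv\<^bsub>Gs i\<^esub> y)) \<le> \<epsilon>" using y by simp
    have "dist (f i (inv\<^bsub>Gs i\<^esub> y)) (inv (f i y)) = dist (f i y \<otimes> f i (inv\<^bsub>Gs i\<^esub> y)) (f i y \<otimes> inv (f i y))"
      by (rule dl[symmetric])
    also have "\<dots> = dist (f i y \<otimes> f i (inv\<^bsub>Gs i\<^esub> y)) \<one>" by simp
    also have "\<dots> \<le> dist (f i \<one>\<^bsub>Gs i\<^esub>) (f i y \<otimes> f i (inv\<^bsub>Gs i\<^esub> y)) + dist (f i \<one>\<^bsub>Gs i\<^esub>) \<one>"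
      by (rule dist_triangle3)
    finally show "dist (f i (inv\<^bsub>Gs i\<^esub> y)) (inv (f i y)) \<le> 2 * \<epsilon>" using a o by simp
  qed
qed

lemma net: assumes "\<epsilon> > 0" shows "\<exists>F. finite F \<and> ball \<one> R \<subseteq> (\<Union>y\<in>F. ball y \<epsilon>)"
proof (cases "R > 0")
  case False
  then have "ball \<one> R = {}" by (auto simp: ball_def) (meson dist_not_less_zero less_le_trans not_le)
  then show ?thesis by (intro exI[of _ "{}"]) auto
next
  case True
  have Rp: "R + \<epsilon> > 0" using True assms by simp
  have "eventually (\<lambda>i. finite {g \<in> carrier (Gs i). f i g \<in> ball \<one> (R + \<epsilon>)}) sequentially"
    using da2[OF Rp assms] by (rule eventually_mono) blast
  moreover have "eventually (\<lambda>i. \<forall>x\<in>ball \<one> R. f i ` carrier (Gs i) \<inter> ball x \<epsilon> \<noteq> {}) sequentially"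
    using da2[OF True assms] by (rule eventually_mono) blast
  ultimately have "eventually (\<lambda>i. finite {g \<in> carrier (Gs i). f i g \<in> ball \<one> (R + \<epsilon>)} \<and>
     (\<forall>x\<in>ball \<one> R. f i ` carrier (Gs i) \<inter> ball x \<epsilon> \<noteq> {})) sequentially"
    by (rule eventually_conj)
  then obtain i where fin: "finite {g \<in> carrier (Gs i). f i g \<in> ball \<one> (R + \<epsilon>)}"
      and den: "\<forall>x\<in>ball \<one> R. f i ` carrier (Gs i) \<inter> ball x \<epsilon> \<noteq> {}"
    using eventually_happens'[OF sequentially_bot] by blast
  let ?F = "f i ` {g \<in> carrier (Gs i). f i g \<in> ball \<one> (R + \<epsilon>)}"
  have "ball \<one> R \<subseteq> (\<Union>y\<in>?F. ball y \<epsilon>)"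
  proof
    fix x assume x: "x \<in> ball \<one> R"
    then obtain g where g: "g \<in> carrier (Gs i)" "f i g \<in> ball x \<epsilon>" using den by blast
    have "dist \<one> (f i g) \<le> dist \<one> x + dist x (f i g)" by (rule dist_triangle)
    then have "f i g \<in> ball \<one> (R + \<epsilon>)" using x g by simp
    then show "x \<in> (\<Union>y\<in>?F. ball y \<epsilon>)" using g by (auto simp: dist_commute)
  qed
  then show ?thesis using fin by blast
qed

lemma compact_cb: "compact (cball \<one> R)"
  by (rule compact_cball_all) (rule net)

end


context dapp begin

interpretation group G by (rule grp)

lemma S_sub: "S i \<subseteq> carrier (Gs i)" by (auto simp: S_def)
lemma H_sub: "subgroup (H i) (Gs i)"
  unfolding H_def using group.generate_is_subgroup[OF grps S_sub] .
lemma S_H: "S i \<subseteq> H i" unfolding H_def by (auto intro: generate.incl)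

definition good where "good p \<longleftrightarrow> (\<exists>\<delta>>0. eventually (\<lambda>i. \<forall>x\<in>carrier (Gs i). dist (f i x) p < \<delta> \<longrightarrow> x \<in> H i) sequentially)"

lemma good_one: "good \<one>"
  unfolding good_def
proof (intro exI[of _ r] conjI always_eventually allI ballI impI)
  fix i x assume "x \<in> carrier (Gs i)" "dist (f i x) \<one> < r"
  then have "x \<in> S i" by (auto simp: S_def dist_commute)
  then show "x \<in> H i" using S_H by blast
qed (rule rpos)

lemma good_open: "good p \<Longrightarrow> \<exists>e>0. \<forall>q. dist q p < e \<longrightarrow> good q"
proof -
  assume "good p"
  then obtain \<delta> where d: "\<delta> > 0" and ev: "eventually (\<lambda>i. \<forall>x\<in>carrier (Gs i). dist (f i x) p < \<delta> \<longrightarrow> x \<in> H i) sequentially"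
    unfolding good_def by blast
  have "good q" if q: "dist q p < \<delta>/2" for q
    unfolding good_def
  proof (intro exI[of _ "\<delta>/2"] conjI)
    show "eventually (\<lambda>i. \<forall>x\<in>carrier (Gs i). dist (f i x) q < \<delta>/2 \<longrightarrow> x \<in> H i) sequentially"
      using ev
    proof (rule eventually_mono, intro ballI impI)
      fix i x assume h: "\<forall>x\<in>carrier (Gs i). dist (f i x) p < \<delta> \<longrightarrow> x \<in> H i" and x: "x \<in> carrier (Gs i)"
        and dx: "dist (f i x) q < \<delta>/2"
      have "dist (f i x) p \<le> dist (f i x) q + dist q p" by (rule dist_triangle)
      then show "x \<in> H i" using h x dx q by simp
    qed
  qed (use d in simp)
  then show ?thesis using d by (intro exI[of _ "\<delta>/2"]) auto
qed

lemma good_closed: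
  assumes app: "\<forall>\<eta>>0. \<exists>q. good q \<and> dist q p < \<eta>"
  shows "good p"
proof -
  have r8: "r/8 > 0" using rpos by simp
  from cinv have "\<exists>d>0. \<forall>a. dist a p < d \<longrightarrow> dist (inv a) (inv p) < r/8"
    unfolding continuous_on_iff using r8 by blast
  then obtain \<eta> where eta: "\<eta> > 0" and ic: "\<And>a. dist a p < \<eta> \<Longrightarrow> dist (inv a) (inv p) < r/8" by blast
  obtain q where gq: "good q" and qp: "dist q p < \<eta>/2" using app eta by (metis half_gt_zero)
  then obtain \<delta>q where dq: "\<delta>q > 0" and evq: "eventually (\<lambda>i. \<forall>x\<in>carrier (Gs i). dist (f i x) q < \<delta>q \<longrightarrow> x \<in> H i) sequentially"
    unfolding good_def by blast
  define \<epsilon> where "\<epsilon> = r/16"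
  have ep: "\<epsilon> > 0" using rpos by (simp add: \<epsilon>_def)
  define \<epsilon>1 where "\<epsilon>1 = min \<delta>q (\<eta>/2)"
  have e1: "\<epsilon>1 > 0" using dq eta by (simp add: \<epsilon>1_def)
  define R where "R = dist \<one> p + \<eta> + 1"
  have Rp: "R > 0" using eta zero_le_dist[of \<one> p] unfolding R_def by linarith
  have qR: "q \<in> ball \<one> R"
  proof -
    have "dist \<one> q \<le> dist \<one> p + dist p q" by (rule dist_triangle)
    moreover have "dist p q < \<eta>/2" using qp by (simp add: dist_commute)
    ultimately have "dist \<one> q < R" unfolding R_def using eta by linarith
    then show ?thesis by simp
  qed
  have evd: "eventually (\<lambda>i. \<forall>x\<in>ball \<one> R. f i ` carrier (Gs i) \<inter> ball x \<epsilon>1 \<noteq> {}) sequentially"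
    using da2[OF Rp e1] by (rule eventually_mono) blast
  have ev: "eventually (\<lambda>i. (\<forall>x\<in>carrier (Gs i). dist (f i x) q < \<delta>q \<longrightarrow> x \<in> H i) \<and>
      (\<forall>x\<in>ball \<one> R. f i ` carrier (Gs i) \<inter> ball x \<epsilon>1 \<noteq> {}) \<and>
      (\<forall>x\<in>carrier (Gs i). \<forall>y\<in>carrier (Gs i). f i x \<in> ball \<one> R \<longrightarrow>
     f i (inv\<^bsub>Gs i\<^esub> y) \<in> ball \<one> R \<longrightarrow> dist (f i (x \<otimes>\<^bsub>Gs i\<^esub> y)) (f i x \<otimes> f i y) \<le> \<epsilon>) \<and>
      (\<forall>y\<in>carrier (Gs i). f i y \<in> ball \<one> R \<longrightarrow>
     dist (f i (inv\<^bsub>Gs i\<^esub> y)) (inv (f i y)) \<le> 2 * \<epsilon>)) sequentially"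
    using evq evd ev_AH[OF Rp ep] ev_INV[OF Rp ep] by (intro eventually_conj)
  show ?thesis unfolding good_def
  proof (intro exI[of _ \<eta>] conjI eta)
    show "eventually (\<lambda>i. \<forall>x\<in>carrier (Gs i). dist (f i x) p < \<eta> \<longrightarrow> x \<in> H i) sequentially"
      using ev
    proof (rule eventually_mono, intro ballI impI)
      fix i x
      assume h: "(\<forall>x\<in>carrier (Gs i). dist (f i x) q < \<delta>q \<longrightarrow> x \<in> H i) \<and>
      (\<forall>x\<in>ball \<one> R. f i ` carrier (Gs i) \<inter> ball x \<epsilon>1 \<noteq> {}) \<and>
      (\<forall>x\<in>carrier (Gs i). \<forall>y\<in>carrier (Gs i). f i x \<in> ball \<one> R \<longrightarrow>
     f i (inv\<^bsub>Gs i\<^esub> y) \<in> ball \<one> R \<longrightarrow> dist (f i (x \<otimes>\<^bsub>Gs i\<^esub> y)) (f i x \<otimes> f i y) \<le> \<epsilon>) \<and>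
      (\<forall>y\<in>carrier (Gs i). f i y \<in> ball \<one> R \<longrightarrow>
     dist (f i (inv\<^bsub>Gs i\<^esub> y)) (inv (f i y)) \<le> 2 * \<epsilon>)"
        and x: "x \<in> carrier (Gs i)" and dx: "dist (f i x) p < \<eta>"
      interpret Gi: group "Gs i" by (rule grps)
      note hq = conjunct1[OF h]
      note hd = conjunct1[OF conjunct2[OF h]]
      note hAH = conjunct1[OF conjunct2[OF conjunct2[OF h]]]
      note hI = conjunct2[OF conjunct2[OF conjunct2[OF h]]]
      have "f i ` carrier (Gs i) \<inter> ball q \<epsilon>1 \<noteq> {}" using hd qR by (rule bspec)
      then obtain y where y: "y \<in> carrier (Gs i)" and fy: "dist q (f i y) < \<epsilon>1"
        by auto
      have "dist (f i y) q < \<delta>q" using fy \<epsilon>1_def by (simp add: dist_commute)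
      then have yH: "y \<in> H i" using hq y by blast
      have "dist (f i y) p \<le> dist (f i y) q + dist q p" by (rule dist_triangle)
      then have dyp: "dist (f i y) p < \<eta>" using fy qp \<epsilon>1_def by (simp add: dist_commute)
      have ix: "dist (inv (f i x)) (inv p) < r/8" using ic dx by blast
      have iy: "dist (inv (f i y)) (inv p) < r/8" using ic dyp by blast
      have fxR: "f i x \<in> ball \<one> R"
      proof -
        have "dist \<one> (f i x) \<le> dist \<one> p + dist p (f i x)" by (rule dist_triangle)
        then show ?thesis using dx by (simp add: R_def dist_commute)
      qed
      have fyR: "f i y \<in> ball \<one> R"
      proof -
        have "dist \<one> (f i y) \<le> dist \<one> p + dist p (f i y)" by (rule dist_triangle)
        then show ?thesis using dyp by (simp add: R_def dist_commute)
      qed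
      have iyc: "inv\<^bsub>Gs i\<^esub> y \<in> carrier (Gs i)" using y by simp
      have fyR': "f i (inv\<^bsub>Gs i\<^esub> (inv\<^bsub>Gs i\<^esub> y)) \<in> ball \<one> R" using fyR y by simp
      have a1: "dist (f i (x \<otimes>\<^bsub>Gs i\<^esub> inv\<^bsub>Gs i\<^esub> y)) (f i x \<otimes> f i (inv\<^bsub>Gs i\<^esub> y)) \<le> \<epsilon>"
        using hAH x iyc fxR fyR' by blast
      have a2: "dist (f i (inv\<^bsub>Gs i\<^esub> y)) (inv (f i y)) \<le> 2 * \<epsilon>" using hI y fyR by blast
      have a3: "dist (f i x \<otimes> f i (inv\<^bsub>Gs i\<^esub> y)) (f i x \<otimes> inv (f i y)) \<le> 2 * \<epsilon>"
        using a2 by (simp add: dl)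
      have "dist (f i x \<otimes> inv (f i y)) \<one> = dist (f i x \<otimes> inv (f i y)) (f i x \<otimes> inv (f i x))"
        by simp
      also have "\<dots> = dist (inv (f i y)) (inv (f i x))" by (rule dl)
      also have "\<dots> \<le> dist (inv (f i y)) (inv p) + dist (inv (f i x)) (inv p)" by (rule dist_triangle2)
      finally have a4: "dist (f i x \<otimes> inv (f i y)) \<one> < r/4" using ix iy by simp
      have "dist (f i (x \<otimes>\<^bsub>Gs i\<^esub> inv\<^bsub>Gs i\<^esub> y)) \<one> \<le>
          dist (f i (x \<otimes>\<^bsub>Gs i\<^esub> inv\<^bsub>Gs i\<^esub> y)) (f i x \<otimes> f i (inv\<^bsub>Gs i\<^esub> y))
          + dist (f i x \<otimes> f i (inv\<^bsub>Gs i\<^esub> y)) (f i x \<otimes> inv (f i y)) + dist (f i x \<otimes> inv (f i y)) \<one>"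
        by (smt (verit) dist_triangle)
      then have "dist (f i (x \<otimes>\<^bsub>Gs i\<^esub> inv\<^bsub>Gs i\<^esub> y)) \<one> < r"
        using a1 a3 a4 rpos unfolding \<epsilon>_def by linarith
      then have "x \<otimes>\<^bsub>Gs i\<^esub> inv\<^bsub>Gs i\<^esub> y \<in> S i" using x iyc by (simp add: S_def dist_commute)
      then have zH: "x \<otimes>\<^bsub>Gs i\<^esub> inv\<^bsub>Gs i\<^esub> y \<in> H i" using S_H by blast
      have "(x \<otimes>\<^bsub>Gs i\<^esub> inv\<^bsub>Gs i\<^esub> y) \<otimes>\<^bsub>Gs i\<^esub> y \<in> H i"
        using subgroup.m_closed[OF H_sub zH yH] .
      moreover have "(x \<otimes>\<^bsub>Gs i\<^esub> inv\<^bsub>Gs i\<^esub> y) \<otimes>\<^bsub>Gs i\<^esub> y = x" using x y by (simp add: Gi.m_assoc)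
      ultimately show "x \<in> H i" by simp
    qed
  qed
qed

lemma good_component: "p \<in> connected_component_set UNIV \<one> \<Longrightarrow> good p"
proof -
  let ?C = "connected_component_set UNIV \<one>"
  let ?A = "{p. good p}"
  have oA: "open ?A" unfolding open_dist
    using good_open by (auto simp: dist_commute)
  have "closure ?A \<subseteq> ?A"
  proof
    fix p assume "p \<in> closure ?A"
    then have "\<forall>\<eta>>0. \<exists>q. good q \<and> dist q p < \<eta>" unfolding closure_approachable by auto
    then show "p \<in> ?A" using good_closed by auto
  qed
  then have cA: "closed ?A" by (simp add: closure_subset_eq)
  have "openin (top_of_set ?C) (?C \<inter> ?A)" using oA by (rule openin_open_Int)
  moreover have "closedin (top_of_set ?C) (?C \<inter> ?A)" using cA by (rule closedin_closed_Int)
  ultimately have "?C \<inter> ?A = {} \<or> ?C \<inter> ?A = ?C"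
    using connected_connected_component[of UNIV \<one>] unfolding connected_clopen by blast
  moreover have "\<one> \<in> ?C \<inter> ?A" using good_one by (simp add: connected_component_refl)
  ultimately have "?C \<subseteq> ?A" by blast
  then show "p \<in> ?C \<Longrightarrow> good p" by blast
qed

end

context dapp begin

interpretation group G by (rule grp)

lemma good_uniform:
  assumes cK: "compact K" and KC: "K \<subseteq> connected_component_set UNIV \<one>"
  shows "\<exists>\<delta>>0. eventually (\<lambda>i. \<forall>x\<in>carrier (Gs i). \<forall>k\<in>K. dist (f i x) k < \<delta> \<longrightarrow> x \<in> H i) sequentially"
proof (cases "K = {}")
  case True
  then show ?thesis by (intro exI[of _ 1]) auto
next
  case False
  have ex: "\<forall>p\<in>K. \<exists>\<delta>. \<delta> > 0 \<and> eventually (\<lambda>i. \<forall>x\<in>carrier (Gs i). dist (f i x) p < \<delta> \<longrightarrow> x \<in> H i) sequentially"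
    using good_component KC unfolding good_def by blast
  then obtain D where D0: "\<forall>p\<in>K. D p > 0 \<and> eventually (\<lambda>i. \<forall>x\<in>carrier (Gs i). dist (f i x) p < D p \<longrightarrow> x \<in> H i) sequentially"
    using bchoice[OF ex] by blast
  have D: "\<And>p. p \<in> K \<Longrightarrow> D p > 0 \<and> eventually (\<lambda>i. \<forall>x\<in>carrier (Gs i). dist (f i x) p < D p \<longrightarrow> x \<in> H i) sequentially"
    using D0 by blast
  have "K \<subseteq> (\<Union>p\<in>K. ball p (D p / 2))"
  proof
    fix p assume "p \<in> K"
    then have "p \<in> ball p (D p / 2)" using D by simp
    then show "p \<in> (\<Union>p\<in>K. ball p (D p / 2))" using \<open>p \<in> K\<close> by blast
  qed
  then obtain F where F: "F \<subseteq> K" "finite F" "K \<subseteq> (\<Union>p\<in>F. ball p (D p / 2))"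
    using compactE_image[OF cK, of K "\<lambda>p. ball p (D p / 2)"] by auto
  have Fne: "F \<noteq> {}" using F False by auto
  define \<delta> where "\<delta> = Min ((\<lambda>p. D p / 2) ` F)"
  have dpos: "\<delta> > 0" unfolding \<delta>_def using F Fne D by (subst Min_gr_iff) auto
  have dle: "\<And>p. p \<in> F \<Longrightarrow> \<delta> \<le> D p / 2" unfolding \<delta>_def using F by (intro Min_le) auto
  have "eventually (\<lambda>i. \<forall>p\<in>F. \<forall>x\<in>carrier (Gs i). dist (f i x) p < D p \<longrightarrow> x \<in> H i) sequentially"
    using F D by (intro eventually_ball_finite) auto
  then have "eventually (\<lambda>i. \<forall>x\<in>carrier (Gs i). \<forall>k\<in>K. dist (f i x) k < \<delta> \<longrightarrow> x \<in> H i) sequentially"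
  proof (rule eventually_mono, intro ballI impI)
    fix i x k assume h: "\<forall>p\<in>F. \<forall>x\<in>carrier (Gs i). dist (f i x) p < D p \<longrightarrow> x \<in> H i"
      and x: "x \<in> carrier (Gs i)" and k: "k \<in> K" and dk: "dist (f i x) k < \<delta>"
    obtain p where p: "p \<in> F" "dist p k < D p / 2" using F k by auto
    have "dist (f i x) p \<le> dist (f i x) k + dist k p" by (rule dist_triangle)
    moreover have "\<delta> \<le> D p / 2" using dle p by blast
    ultimately have "dist (f i x) p < D p" using dk p by (simp add: dist_commute)
    then show "x \<in> H i" using h p x by blast
  qed
  then show ?thesis using dpos by blast
qed

end

context dapp begin

interpretation group G by (rule grp)

lemma conj_ev:
  assumes R1: "R1 > 0"
  shows "eventually (\<lambda>i. \<forall>t\<in>carrier (Gs i). \<forall>s\<in>carrier (Gs i). f i t \<in> ball \<one> R1 \<longrightarrow> f i s \<in> ball \<one> r \<longrightarrow>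
     t \<otimes>\<^bsub>Gs i\<^esub> s \<otimes>\<^bsub>Gs i\<^esub> inv\<^bsub>Gs i\<^esub> t \<in> H i) sequentially"
proof -
  let ?C = "connected_component_set UNIV \<one>"
  define B where "B = closure (ball \<one> r)"
  have BC: "B \<subseteq> ?C" unfolding B_def
    using closure_minimal[OF rcomp closed_connected_component[OF closed_UNIV]] .
  have Bsub: "B \<subseteq> cball \<one> r" unfolding B_def by (rule closure_minimal[OF ball_subset_cball closed_cball])
  have cB: "compact B"
  proof -
    have "compact (cball \<one> r \<inter> B)" unfolding B_def by (intro compact_Int_closed compact_cb closed_closure)
    moreover have "cball \<one> r \<inter> B = B" using Bsub by blast
    ultimately show ?thesis by simp
  qed
  define K where "K = (\<lambda>z. fst z \<otimes> snd z \<otimes> inv (fst z)) ` (cball \<one> R1 \<times> B)"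
  have cK: "compact K" unfolding K_def
  proof (rule compact_continuous_image)
    show "continuous_on (cball \<one> R1 \<times> B) (\<lambda>z. fst z \<otimes> snd z \<otimes> inv (fst z))"
      by (intro cont_mult cont_inv continuous_on_fst continuous_on_snd continuous_on_id)
    show "compact (cball \<one> R1 \<times> B)" using compact_cb cB by (rule compact_Times)
  qed
  have KC: "K \<subseteq> ?C" unfolding K_def using BC conj_component by auto
  obtain \<delta> where dpos: "\<delta> > 0" and evK: "eventually (\<lambda>i. \<forall>x\<in>carrier (Gs i). \<forall>k\<in>K. dist (f i x) k < \<delta> \<longrightarrow> x \<in> H i) sequentially"
    using good_uniform[OF cK KC] by blast
  define R2 where "R2 = 2 * R1 + r + 10"
  have R2p: "R2 > 0" using R1 rpos by (simp add: R2_def)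
  define M where "M = cball \<one> R2 \<times> cball \<one> R2"
  have cM: "compact M" unfolding M_def using compact_cb compact_cb by (rule compact_Times)
  have "uniformly_continuous_on M (\<lambda>z. fst z \<otimes> snd z)"
    using compact_uniformly_continuous[OF continuous_on_subset[OF cmul] cM] by simp
  then obtain d1 where d1: "d1 > 0" and ucd: "\<And>z z'. z \<in> M \<Longrightarrow> z' \<in> M \<Longrightarrow> dist z' z < d1 \<Longrightarrow>
      dist (fst z' \<otimes> snd z') (fst z \<otimes> snd z) < \<delta>/2"
    unfolding uniformly_continuous_on_def using dpos by (metis half_gt_zero)
  define \<epsilon> where "\<epsilon> = min (d1/2) (min (\<delta>/8) 1)"
  have ep: "\<epsilon> > 0" using d1 dpos by (simp add: \<epsilon>_def)
  have e1: "\<epsilon> \<le> d1/2" "\<epsilon> \<le> \<delta>/8" "\<epsilon> \<le> 1" by (auto simp: \<epsilon>_def)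
  have ev: "eventually (\<lambda>i. (\<forall>x\<in>carrier (Gs i). \<forall>k\<in>K. dist (f i x) k < \<delta> \<longrightarrow> x \<in> H i) \<and>
      (\<forall>x\<in>carrier (Gs i). \<forall>y\<in>carrier (Gs i). f i x \<in> ball \<one> R2 \<longrightarrow>
     f i (inv\<^bsub>Gs i\<^esub> y) \<in> ball \<one> R2 \<longrightarrow> dist (f i (x \<otimes>\<^bsub>Gs i\<^esub> y)) (f i x \<otimes> f i y) \<le> \<epsilon>) \<and>
      (\<forall>y\<in>carrier (Gs i). f i y \<in> ball \<one> R2 \<longrightarrow>
     dist (f i (inv\<^bsub>Gs i\<^esub> y)) (inv (f i y)) \<le> 2 * \<epsilon>)) sequentially"
    using evK ev_AH[OF R2p ep] ev_INV[OF R2p ep] by (intro eventually_conj)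
  then show ?thesis
  proof (rule eventually_mono, intro ballI impI)
    fix i t s
    assume h: "(\<forall>x\<in>carrier (Gs i). \<forall>k\<in>K. dist (f i x) k < \<delta> \<longrightarrow> x \<in> H i) \<and>
      (\<forall>x\<in>carrier (Gs i). \<forall>y\<in>carrier (Gs i). f i x \<in> ball \<one> R2 \<longrightarrow>
     f i (inv\<^bsub>Gs i\<^esub> y) \<in> ball \<one> R2 \<longrightarrow> dist (f i (x \<otimes>\<^bsub>Gs i\<^esub> y)) (f i x \<otimes> f i y) \<le> \<epsilon>) \<and>
      (\<forall>y\<in>carrier (Gs i). f i y \<in> ball \<one> R2 \<longrightarrow>
     dist (f i (inv\<^bsub>Gs i\<^esub> y)) (inv (f i y)) \<le> 2 * \<epsilon>)"
      and t: "t \<in> carrier (Gs i)" and s: "s \<in> carrier (Gs i)"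
      and ft: "f i t \<in> ball \<one> R1" and fs: "f i s \<in> ball \<one> r"
    interpret Gi: group "Gs i" by (rule grps)
    note hK = conjunct1[OF h]
    note hAH = conjunct1[OF conjunct2[OF h]]
    note hI = conjunct2[OF conjunct2[OF h]]
    let ?a = "f i t" and ?b = "f i s"
    let ?u = "t \<otimes>\<^bsub>Gs i\<^esub> s"
    have uc: "?u \<in> carrier (Gs i)" using t s by simp
    have its: "inv\<^bsub>Gs i\<^esub> s \<in> carrier (Gs i)" and itc: "inv\<^bsub>Gs i\<^esub> t \<in> carrier (Gs i)" using t s by auto
    have da: "dist \<one> ?a < R1" and db: "dist \<one> ?b < r" using ft fs by auto
    have fsR2: "?b \<in> ball \<one> R2" and ftR2: "?a \<in> ball \<one> R2" using da db R1 rpos by (auto simp: R2_def)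
    have i1: "dist (f i (inv\<^bsub>Gs i\<^esub> s)) (inv ?b) \<le> 2 * \<epsilon>" using hI s fsR2 by blast
    have "dist \<one> (f i (inv\<^bsub>Gs i\<^esub> s)) \<le> dist \<one> (inv ?b) + dist (inv ?b) (f i (inv\<^bsub>Gs i\<^esub> s))"
      by (rule dist_triangle)
    then have "dist \<one> (f i (inv\<^bsub>Gs i\<^esub> s)) < R2" using i1 e1 db dist_inv_one[of ?b] R1
      by (simp add: R2_def dist_commute)
    then have fisR2: "f i (inv\<^bsub>Gs i\<^esub> s) \<in> ball \<one> R2" by simp
    have a1: "dist (f i ?u) (?a \<otimes> ?b) \<le> \<epsilon>" using hAH t s ftR2 fisR2 by blast
    have "dist \<one> (f i ?u) \<le> dist \<one> (?a \<otimes> ?b) + dist (?a \<otimes> ?b) (f i ?u)" by (rule dist_triangle)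
    moreover have "dist \<one> (?a \<otimes> ?b) \<le> dist \<one> ?a + dist \<one> ?b" by (rule dist_mult_le)
    moreover have "dist (?a \<otimes> ?b) (f i ?u) \<le> \<epsilon>" using a1 by (simp add: dist_commute)
    ultimately have "dist \<one> (f i ?u) < R2" using e1 da db R1 unfolding R2_def by linarith
    then have fuR2: "f i ?u \<in> ball \<one> R2" by simp
    have fiitR2: "f i (inv\<^bsub>Gs i\<^esub> (inv\<^bsub>Gs i\<^esub> t)) \<in> ball \<one> R2" using ftR2 t by simp
    have a2: "dist (f i (?u \<otimes>\<^bsub>Gs i\<^esub> inv\<^bsub>Gs i\<^esub> t)) (f i ?u \<otimes> f i (inv\<^bsub>Gs i\<^esub> t)) \<le> \<epsilon>"
      using hAH uc itc fuR2 fiitR2 by blast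
    have "dist (f i ?u \<otimes> f i (inv\<^bsub>Gs i\<^esub> t)) (f i ?u \<otimes> inv ?a) = dist (f i (inv\<^bsub>Gs i\<^esub> t)) (inv ?a)"
      by (rule dl)
    also have "\<dots> \<le> 2 * \<epsilon>" using hI t ftR2 by blast
    finally have a3: "dist (f i ?u \<otimes> f i (inv\<^bsub>Gs i\<^esub> t)) (f i ?u \<otimes> inv ?a) \<le> 2 * \<epsilon>" .
    have ab: "dist \<one> (?a \<otimes> ?b) < R2" using dist_mult_le[of ?a ?b] da db R1 by (simp add: R2_def)
    have ia: "dist \<one> (inv ?a) < R2" using dist_inv_one[of ?a] da R1 rpos by (simp add: R2_def dist_commute)
    have z1: "(?a \<otimes> ?b, inv ?a) \<in> M" and z2: "(f i ?u, inv ?a) \<in> M"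
      using ab ia fuR2 by (auto simp: M_def)
    have "dist (f i ?u, inv ?a) (?a \<otimes> ?b, inv ?a) = dist (f i ?u) (?a \<otimes> ?b)"
      by (simp add: dist_Pair_Pair)
    then have "dist (f i ?u, inv ?a) (?a \<otimes> ?b, inv ?a) < d1" using a1 e1 d1 by simp
    from ucd[OF z1 z2 this] have a4: "dist (f i ?u \<otimes> inv ?a) (?a \<otimes> ?b \<otimes> inv ?a) < \<delta>/2" by simp
    have "dist (f i (?u \<otimes>\<^bsub>Gs i\<^esub> inv\<^bsub>Gs i\<^esub> t)) (?a \<otimes> ?b \<otimes> inv ?a) \<le>
        dist (f i (?u \<otimes>\<^bsub>Gs i\<^esub> inv\<^bsub>Gs i\<^esub> t)) (f i ?u \<otimes> f i (inv\<^bsub>Gs i\<^esub> t))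
        + dist (f i ?u \<otimes> f i (inv\<^bsub>Gs i\<^esub> t)) (f i ?u \<otimes> inv ?a)
        + dist (f i ?u \<otimes> inv ?a) (?a \<otimes> ?b \<otimes> inv ?a)"
      by (smt (verit) dist_triangle)
    then have dd: "dist (f i (?u \<otimes>\<^bsub>Gs i\<^esub> inv\<^bsub>Gs i\<^esub> t)) (?a \<otimes> ?b \<otimes> inv ?a) < \<delta>"
      using a2 a3 a4 e1 dpos by linarith
    have "?a \<otimes> ?b \<otimes> inv ?a \<in> K" unfolding K_def
      using da closure_subset[of "ball \<one> r"] fs
      by (intro image_eqI[of _ _ "(?a, ?b)"]) (auto simp: B_def)
    moreover have "?u \<otimes>\<^bsub>Gs i\<^esub> inv\<^bsub>Gs i\<^esub> t \<in> carrier (Gs i)" using uc itc by simp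
    ultimately show "t \<otimes>\<^bsub>Gs i\<^esub> s \<otimes>\<^bsub>Gs i\<^esub> inv\<^bsub>Gs i\<^esub> t \<in> H i" using hK dd by blast
  qed
qed

end

context dapp begin

interpretation group G by (rule grp)

lemma final: "eventually (\<lambda>i. H i \<lhd> Gs i) sequentially"
proof -
  obtain R0 N0 where R0: "R0 > 0" and N0: "\<forall>i\<ge>N0.
        generate (Gs i) {g \<in> carrier (Gs i). f i g \<in> ball \<one> R0} = carrier (Gs i) \<and>
        \<one>\<^bsub>Gs i\<^esub> \<in> {g \<in> carrier (Gs i). f i g \<in> ball \<one> R0}"
    using da1 by blast
  have R1: "R0 + 3 > 0" using R0 by simp
  have one: "(1::real) > 0" by simp
  have "eventually (\<lambda>i. generate (Gs i) {g \<in> carrier (Gs i). f i g \<in> ball \<one> R0} = carrier (Gs i)) sequentially"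
    using N0 eventually_sequentially by blast
  with conj_ev[OF R1] ev_INV[OF R0 one]
  have ev: "eventually (\<lambda>i. (\<forall>t\<in>carrier (Gs i). \<forall>s\<in>carrier (Gs i). f i t \<in> ball \<one> (R0+3) \<longrightarrow> f i s \<in> ball \<one> r \<longrightarrow>
     t \<otimes>\<^bsub>Gs i\<^esub> s \<otimes>\<^bsub>Gs i\<^esub> inv\<^bsub>Gs i\<^esub> t \<in> H i) \<and>
     (\<forall>y\<in>carrier (Gs i). f i y \<in> ball \<one> R0 \<longrightarrow>
     dist (f i (inv\<^bsub>Gs i\<^esub> y)) (inv (f i y)) \<le> 2 * 1) \<and>
     generate (Gs i) {g \<in> carrier (Gs i). f i g \<in> ball \<one> R0} = carrier (Gs i)) sequentially"
    by (intro eventually_conj)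
  then show ?thesis
  proof (rule eventually_mono)
    fix i assume h: "(\<forall>t\<in>carrier (Gs i). \<forall>s\<in>carrier (Gs i). f i t \<in> ball \<one> (R0+3) \<longrightarrow> f i s \<in> ball \<one> r \<longrightarrow>
     t \<otimes>\<^bsub>Gs i\<^esub> s \<otimes>\<^bsub>Gs i\<^esub> inv\<^bsub>Gs i\<^esub> t \<in> H i) \<and>
     (\<forall>y\<in>carrier (Gs i). f i y \<in> ball \<one> R0 \<longrightarrow>
     dist (f i (inv\<^bsub>Gs i\<^esub> y)) (inv (f i y)) \<le> 2 * 1) \<and>
     generate (Gs i) {g \<in> carrier (Gs i). f i g \<in> ball \<one> R0} = carrier (Gs i)"
    interpret Gi: group "Gs i" by (rule grps)
    note hc = conjunct1[OF h]
    note hI = conjunct1[OF conjunct2[OF h]]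
    note hg = conjunct2[OF conjunct2[OF h]]
    show "H i \<lhd> Gs i" unfolding H_def
    proof (rule Gi.normal_generate[of "{g \<in> carrier (Gs i). f i g \<in> ball \<one> R0}"])
      show "{g \<in> carrier (Gs i). f i g \<in> ball \<one> R0} \<subseteq> carrier (Gs i)" by blast
      show "generate (Gs i) {g \<in> carrier (Gs i). f i g \<in> ball \<one> R0} = carrier (Gs i)" using hg by blast
      show "S i \<subseteq> carrier (Gs i)" by (rule S_sub)
      show "\<forall>t\<in>{g \<in> carrier (Gs i). f i g \<in> ball \<one> R0}. \<forall>s\<in>S i.
          t \<otimes>\<^bsub>Gs i\<^esub> s \<otimes>\<^bsub>Gs i\<^esub> inv\<^bsub>Gs i\<^esub> t \<in> generate (Gs i) (S i) \<and>
          inv\<^bsub>Gs i\<^esub> t \<otimes>\<^bsub>Gs i\<^esub> s \<otimes>\<^bsub>Gs i\<^esub> t \<in> generate (Gs i) (S i)"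
      proof (intro ballI conjI)
        fix t s assume t: "t \<in> {g \<in> carrier (Gs i). f i g \<in> ball \<one> R0}" and s: "s \<in> S i"
        have tc: "t \<in> carrier (Gs i)" and ft: "dist \<one> (f i t) < R0" using t by auto
        have sc: "s \<in> carrier (Gs i)" and fs: "f i s \<in> ball \<one> r" using s by (auto simp: S_def)
        have "f i t \<in> ball \<one> (R0 + 3)" using ft by simp
        then show "t \<otimes>\<^bsub>Gs i\<^esub> s \<otimes>\<^bsub>Gs i\<^esub> inv\<^bsub>Gs i\<^esub> t \<in> generate (Gs i) (S i)"
          using hc tc sc fs unfolding H_def by blast
        have itc: "inv\<^bsub>Gs i\<^esub> t \<in> carrier (Gs i)" using tc by simp
        have i1: "dist (f i (inv\<^bsub>Gs i\<^esub> t)) (inv (f i t)) \<le> 2" using hI tc ft by auto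
        have "dist \<one> (f i (inv\<^bsub>Gs i\<^esub> t)) \<le> dist \<one> (inv (f i t)) + dist (inv (f i t)) (f i (inv\<^bsub>Gs i\<^esub> t))"
          by (rule dist_triangle)
        then have "dist \<one> (f i (inv\<^bsub>Gs i\<^esub> t)) < R0 + 3" using i1 ft dist_inv_one[of "f i t"]
          by (simp add: dist_commute)
        then have "f i (inv\<^bsub>Gs i\<^esub> t) \<in> ball \<one> (R0 + 3)" by simp
        then have "inv\<^bsub>Gs i\<^esub> t \<otimes>\<^bsub>Gs i\<^esub> s \<otimes>\<^bsub>Gs i\<^esub> inv\<^bsub>Gs i\<^esub> (inv\<^bsub>Gs i\<^esub> t) \<in> H i"
          using hc itc sc fs by blast
        then show "inv\<^bsub>Gs i\<^esub> t \<otimes>\<^bsub>Gs i\<^esub> s \<otimes>\<^bsub>Gs i\<^esub> t \<in> generate (Gs i) (S i)"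
          using tc unfolding H_def by simp
      qed
    qed
  qed
qed

end

lemma lie_lc:
  fixes G :: "'g::metric_space monoid"
  assumes "lie_group TYPE('e::euclidean_space) G"
  shows "\<exists>\<rho>>0. compact (cball \<one>\<^bsub>G\<^esub> \<rho>)"
proof -
  obtain V :: "'e set" and A :: "('g set \<times> ('g \<Rightarrow> 'e)) set" where sa: "smooth_atlas V A"
    using assms unfolding lie_group_def by blast
  then have sV: "subspace V" and chs: "\<forall>c\<in>A. is_chart V c" and cov: "\<Union>(fst ` A) = UNIV"
    unfolding smooth_atlas_def by auto
  from cov obtain c where c: "c \<in> A" "\<one>\<^bsub>G\<^esub> \<in> fst c" by (metis UNIV_I UnionE imageE)
  obtain U \<phi> where c2: "c = (U, \<phi>)" by (cases c)
  show ?thesis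
    using chart_local_compact[of V U \<phi> "\<one>\<^bsub>G\<^esub>"] chs c c2 sV by auto
qed

theorem mainTheorem13:
  fixes G :: "'g::metric_space monoid"
    and Gs :: "nat \<Rightarrow> 'a monoid"
    and f :: "nat \<Rightarrow> 'a \<Rightarrow> 'g"
    and r :: real
  assumes "lie_group TYPE('e::euclidean_space) G"
    and "left_invariant_metric G"
    and "\<And>i. group (Gs i)"
    and "discrete_approximation Gs G f"
    and "r > 0"
    and "ball \<one>\<^bsub>G\<^esub> r \<subseteq> connected_component_set UNIV \<one>\<^bsub>G\<^esub>"
  shows "\<exists>N. \<forall>i\<ge>N.
           generate (Gs i) {g \<in> carrier (Gs i). f i g \<in> ball \<one>\<^bsub>G\<^esub> r} \<lhd> Gs i"
proof -
  from assms(1) have grp: "group G" and carr: "carrier G = UNIV"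
    and cm: "continuous_on UNIV (\<lambda>p. fst p \<otimes>\<^bsub>G\<^esub> snd p)" and ci: "continuous_on UNIV (\<lambda>x. inv\<^bsub>G\<^esub> x)"
    unfolding lie_group_def by auto
  have lc: "\<exists>\<rho>>0. compact (cball \<one>\<^bsub>G\<^esub> \<rho>)" by (rule lie_lc[OF assms(1)])
  have mg: "mgroup G" by (rule mgroup.intro[OF grp carr assms(2) cm ci lc])
  have dp: "dapp G Gs f r"
    by (rule dapp.intro[OF mg dapp_axioms.intro]) (use assms(3-6) in auto)
  interpret dapp G Gs f r by (rule dp)
  have "eventually (\<lambda>i. H i \<lhd> Gs i) sequentially" by (rule final)
  then show ?thesis unfolding eventually_sequentially H_def S_def by blast
qed

end
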